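(* Let $\alpha,\beta,\gamma\in\mathbb{Z}[i]$ satisfy $\alpha^2+i\beta^2+(1+i)\gamma^2=0$, $\alpha\beta\gamma\neq0$, $\gcd(\alpha,\beta)\in U$. Then there are units $\varepsilon_1,\varepsilon_2,\varepsilon_3\in U$ such that $(X,Y,Z)=(\varepsilon_1\alpha,\varepsilon_2\beta,\varepsilon_3\gamma)$ satisfies $X^2+iY^2=(1+i)Z^2$ with $X,Y,Z\in O^I$, $\gcd(X,Y)\in U$, $XYZ\neq0$. Conversely, if $(X,Y,Z)$ satisfies $X^2+iY^2=(1+i)Z^2$, $\gcd(X,Y)\in U$, $XYZ\ne0$, then $(X,Y,iZ)$ is a solution of $X^2+iY^2+(1+i)Z^2=0$ with the same conditions.
   Context: $\mathbb{Z}[i]$ is the ring of Gaussian integers, $U=\{1,-1,i,-i\}$ its unit group; $R(\alpha),I(\alpha)$ are real and imaginary parts. $\gcd(x,y)\in U$ means no common non-unit divisor. $O=\{\alpha: R(\alpha)+I(\alpha)\equiv1\pmod 2\}$, $O^I=\{\alpha\in O: R(\alpha)\equiv 1\pmod 4\}$. *)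

theory Defs
  imports Complex_Main
begin

definition gauss_ints :: "complex set" where
  "gauss_ints = {z. Re z \<in> \<int> \<and> Im z \<in> \<int>}"

definition gunits :: "complex set" where
  "gunits = {1, -1, \<i>, -\<i>}"

definition gdvd :: "complex \<Rightarrow> complex \<Rightarrow> bool" where
  "gdvd d x \<longleftrightarrow> (\<exists>k\<in>gauss_ints. x = d * k)"

text \<open>gcd(x,y) in U: every common divisor in Z[i] is a unit.\<close>
definition gcoprime :: "complex \<Rightarrow> complex \<Rightarrow> bool" where
  "gcoprime x y \<longleftrightarrow> (\<forall>d\<in>gauss_ints. gdvd d x \<and> gdvd d y \<longrightarrow> d \<in> gunits)"

definition gO :: "complex set" where
  "gO = {z \<in> gauss_ints. (\<lfloor>Re z\<rfloor> + \<lfloor>Im z\<rfloor>) mod 2 = 1}"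

definition gOI :: "complex set" where
  "gOI = {z \<in> gO. \<lfloor>Re z\<rfloor> mod 4 = 1}"

end

theory Submission
  imports Defs
begin

lemma gi_obtain: assumes "z \<in> gauss_ints" obtains a b :: int where "z = Complex (of_int a) (of_int b)"
proof -
  from assms obtain a where "Re z = of_int a" unfolding gauss_ints_def by (auto elim: Ints_cases)
  moreover from assms obtain b where "Im z = of_int b" unfolding gauss_ints_def by (auto elim: Ints_cases)
  ultimately show ?thesis using that by (metis complex_surj)
qed

lemma gi_Complex[simp]: "Complex (of_int a) (of_int b) \<in> gauss_ints"
  unfolding gauss_ints_def by auto

lemma gOI_iff: "Complex (of_int a) (of_int b) \<in> gOI \<longleftrightarrow> odd (a+b) \<and> a mod 4 = 1"
  unfolding gOI_def gO_def by simp presburger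

lemma gi_mult: "x \<in> gauss_ints \<Longrightarrow> y \<in> gauss_ints \<Longrightarrow> x*y \<in> gauss_ints"
proof -
  assume "x \<in> gauss_ints" "y \<in> gauss_ints"
  then show ?thesis unfolding gauss_ints_def by auto
qed

lemma gunits_gi: "u \<in> gunits \<Longrightarrow> u \<in> gauss_ints"
  unfolding gunits_def gauss_ints_def by auto

lemma gunits_inv: "u \<in> gunits \<Longrightarrow> inverse u \<in> gunits \<and> u \<noteq> 0"
  unfolding gunits_def by (auto simp: complex_eq_iff)

lemma gdvd_unit: assumes "gdvd d (u*x)" "u \<in> gunits" shows "gdvd d x"
proof -
  obtain k where k: "k \<in> gauss_ints" "u*x = d*k" using assms unfolding gdvd_def by auto
  have "x = d * (inverse u * k)" using k gunits_inv[OF assms(2)] by (metis left_inverse mult.assoc mult.left_commute mult_1)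
  moreover have "inverse u * k \<in> gauss_ints" using gi_mult gunits_gi gunits_inv assms k by blast
  ultimately show ?thesis unfolding gdvd_def by blast
qed

lemma gcoprime_units: "gcoprime x y \<Longrightarrow> u \<in> gunits \<Longrightarrow> v \<in> gunits \<Longrightarrow> gcoprime (u*x) (v*y)"
  unfolding gcoprime_def using gdvd_unit by blast

lemma one_i_dvd: assumes "even (a1+a2)" shows "gdvd (1+\<i>) (Complex (of_int a1) (of_int a2))"
proof -
  obtain p where p: "a1 + a2 = 2*p" using assms by (metis evenE)
  have "(1+\<i>) * Complex (of_int p) (of_int (p - a1)) = Complex (of_int a1) (of_int a2)"
    using p by (simp add: complex_eq_iff)
  then show ?thesis unfolding gdvd_def by (metis gi_Complex)
qed

lemma not_cop: "even (a1+a2) \<Longrightarrow> even (b1+b2) \<Longrightarrow> \<not> gcoprime (Complex (of_int a1) (of_int a2)) (Complex (of_int b1) (of_int b2))"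
proof -
  assume h: "even (a1+a2)" "even (b1+b2)"
  have "(1+\<i>) \<in> gauss_ints" by (simp add: gauss_ints_def)
  moreover have "(1+\<i>) \<notin> gunits" by (auto simp: gunits_def complex_eq_iff)
  ultimately show ?thesis unfolding gcoprime_def using one_i_dvd[OF h(1)] one_i_dvd[OF h(2)] by blast
qed

lemma normalize: assumes "odd (a+b)" shows "\<exists>e\<in>gunits. e * Complex (of_int a) (of_int b) \<in> gOI"
proof (cases "odd a")
  case True
  then have "a mod 4 = 1 \<or> a mod 4 = 3" by presburger
  then show ?thesis
  proof
    assume "a mod 4 = 1" then show ?thesis using assms by (intro bexI[of _ 1]) (auto simp: gOI_iff gunits_def)
  next
    assume h: "a mod 4 = 3"
    have "-1 * Complex (of_int a) (of_int b) = Complex (of_int (-a)) (of_int (-b))" by (simp add: complex_eq_iff)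
    moreover have "odd (-a + -b) \<and> (-a) mod 4 = 1" using assms h by presburger
    ultimately show ?thesis
      by (intro bexI[of _ "-1"]) (metis gOI_iff, unfold gunits_def, blast)
  qed
next
  case False
  then have "b mod 4 = 1 \<or> b mod 4 = 3" using assms by presburger
  then show ?thesis
  proof
    assume h: "b mod 4 = 1"
    have "-\<i> * Complex (of_int a) (of_int b) = Complex (of_int b) (of_int (-a))" by (simp add: complex_eq_iff)
    moreover have "odd (b + -a) \<and> b mod 4 = 1" using assms h by presburger
    ultimately show ?thesis
      by (intro bexI[of _ "-\<i>"]) (metis gOI_iff, unfold gunits_def, blast)
  next
    assume h: "b mod 4 = 3"
    have "\<i> * Complex (of_int a) (of_int b) = Complex (of_int (-b)) (of_int a)" by (simp add: complex_eq_iff)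
    moreover have "odd (-b + a) \<and> (-b) mod 4 = 1" using assms h by presburger
    ultimately show ?thesis
      by (intro bexI[of _ "\<i>"]) (metis gOI_iff, unfold gunits_def, blast)
  qed
qed

lemma sq_gOI: assumes "x \<in> gOI" shows "\<exists>k m::int. x\<^sup>2 = Complex (of_int (4*k+1)) (of_int (4*m))"
proof -
  have "x \<in> gauss_ints" using assms unfolding gOI_def gO_def by auto
  then obtain a b where x: "x = Complex (of_int a) (of_int b)" by (rule gi_obtain)
  with assms have h: "odd (a+b)" "a mod 4 = 1" by (auto simp: gOI_iff)
  then obtain q where q: "a = 4*q+1" by (metis mult.commute mod_mult_div_eq add.commute)
  have "even b" using h q by presburger
  then obtain r where r: "b = 2*r" by auto
  have "x\<^sup>2 = Complex (of_int (4*(4*q*q+2*q - r*r)+1)) (of_int (4*(r*(4*q+1))))"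
    unfolding x q r by (simp add: complex_eq_iff power2_eq_square algebra_simps)
  then show ?thesis by blast
qed

lemma C_add: "Complex (of_int a) (of_int b) + Complex (of_int c) (of_int d) = Complex (of_int (a+c)) (of_int (b+d))"
  by (simp add: complex_eq_iff)
lemma C_mult: "Complex (of_int a) (of_int b) * Complex (of_int c) (of_int d) = Complex (of_int (a*c-b*d)) (of_int (a*d+b*c))"
  by (simp add: complex_eq_iff)
lemma C_uminus: "- Complex (of_int a) (of_int b) = Complex (of_int (-a)) (of_int (-b))"
  by (simp add: complex_eq_iff)
lemma C_eq: "Complex (of_int a) (of_int b) = Complex (of_int c) (of_int d) \<longleftrightarrow> a = c \<and> b = d"
  by (simp add: complex_eq_iff)
lemma C_zero: "(0::complex) = Complex (of_int 0) (of_int 0)" by (simp add: complex_eq_iff)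
lemma C_one: "(1::complex) = Complex (of_int 1) (of_int 0)" by (simp add: complex_eq_iff)
lemma C_i: "\<i> = Complex (of_int 0) (of_int 1)" by (simp add: complex_eq_iff)

lemma core:
  fixes X Y Z s1 s2 s3 :: complex
  assumes X: "X = Complex (of_int (4*k1+1)) (of_int (4*m1))"
    and Y: "Y = Complex (of_int (4*k2+1)) (of_int (4*m2))"
    and Z: "Z = Complex (of_int (4*k3+1)) (of_int (4*m3))"
    and s: "s1 = 1 \<or> s1 = -1" "s2 = 1 \<or> s2 = -1" "s3 = 1 \<or> s3 = -1"
    and eq: "s1*X + \<i>*(s2*Y) + (1+\<i>)*(s3*Z) = 0"
  shows "X + \<i>*Y = (1+\<i>)*Z"
  using s eq unfolding X Y Z
  apply (elim disjE; hypsubst)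
  apply (simp only: C_one C_i C_zero C_add C_mult C_uminus C_eq; presburger)+
  done

lemma unit_sq: "u \<in> gunits \<Longrightarrow> (u\<^sup>2 = 1 \<or> u\<^sup>2 = -1) \<and> a\<^sup>2 = u\<^sup>2 * (u*a)\<^sup>2 \<and> u \<noteq> 0"
  unfolding gunits_def by (auto simp: power2_eq_square algebra_simps complex_eq_iff)

lemma par1: "even (a1*a1 - a2*a2 - 2*b1*b2 + c1*c1 - c2*c2 - 2*c1*c2 + (2*a1*a2 + b1*b1 - b2*b2 + c1*c1 - c2*c2 + 2*c1*c2::int)) \<Longrightarrow> even (a1+a2) = even (b1+b2)"
  by (simp; blast)
lemma par2: "even (a1*a1 - a2*a2 - 2*b1*b2 + c1*c1 - c2*c2 - 2*c1*c2::int) \<Longrightarrow> odd (a1+a2) \<Longrightarrow> odd (c1+c2)"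
  by (simp; blast)

lemma part1:
  assumes A: "\<alpha> \<in> gauss_ints" and B: "\<beta> \<in> gauss_ints" and G: "\<gamma> \<in> gauss_ints"
    and eq: "\<alpha>\<^sup>2 + \<i> * \<beta>\<^sup>2 + (1 + \<i>) * \<gamma>\<^sup>2 = 0" and nz: "\<alpha> * \<beta> * \<gamma> \<noteq> 0"
    and cop: "gcoprime \<alpha> \<beta>"
  shows "\<exists>\<epsilon>1\<in>gunits. \<exists>\<epsilon>2\<in>gunits. \<exists>\<epsilon>3\<in>gunits.
               (\<epsilon>1 * \<alpha>)\<^sup>2 + \<i> * (\<epsilon>2 * \<beta>)\<^sup>2 = (1 + \<i>) * (\<epsilon>3 * \<gamma>)\<^sup>2 \<and>
               \<epsilon>1 * \<alpha> \<in> gOI \<and> \<epsilon>2 * \<beta> \<in> gOI \<and> \<epsilon>3 * \<gamma> \<in> gOI \<and>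
               gcoprime (\<epsilon>1 * \<alpha>) (\<epsilon>2 * \<beta>) \<and>
               (\<epsilon>1 * \<alpha>) * (\<epsilon>2 * \<beta>) * (\<epsilon>3 * \<gamma>) \<noteq> 0"
proof -
  obtain a1 a2 where a: "\<alpha> = Complex (of_int a1) (of_int a2)" using A by (rule gi_obtain)
  obtain b1 b2 where b: "\<beta> = Complex (of_int b1) (of_int b2)" using B by (rule gi_obtain)
  obtain c1 c2 where c: "\<gamma> = Complex (of_int c1) (of_int c2)" using G by (rule gi_obtain)
  define R where "R = a1*a1 - a2*a2 - 2*b1*b2 + c1*c1 - c2*c2 - 2*c1*c2"
  define I where "I = 2*a1*a2 + b1*b1 - b2*b2 + c1*c1 - c2*c2 + 2*c1*c2"
  have "\<alpha>\<^sup>2 + \<i> * \<beta>\<^sup>2 + (1 + \<i>) * \<gamma>\<^sup>2 = Complex (of_int R) (of_int I)"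
    unfolding a b c R_def I_def
    by (simp only: power2_eq_square C_one C_i C_add C_mult C_eq) (intro conjI; algebra)
  with eq have RI: "R = 0" "I = 0" by (simp_all add: complex_eq_iff)
  have "even (R + I)" using RI by simp
  then have p1: "even (a1+a2) = even (b1+b2)" unfolding R_def I_def by (rule par1)
  have ab: "odd (a1+a2)" "odd (b1+b2)" using p1 not_cop cop a b by blast+
  have "even R" using RI by simp
  then have cc: "odd (c1+c2)" using ab(1) unfolding R_def by (rule par2)
  obtain e1 where e1: "e1 \<in> gunits" "e1 * \<alpha> \<in> gOI" using normalize[OF ab(1)] a by blast
  obtain e2 where e2: "e2 \<in> gunits" "e2 * \<beta> \<in> gOI" using normalize[OF ab(2)] b by blast
  obtain e3 where e3: "e3 \<in> gunits" "e3 * \<gamma> \<in> gOI" using normalize[OF cc] c by blast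
  obtain k1 m1 where x: "(e1*\<alpha>)\<^sup>2 = Complex (of_int (4*k1+1)) (of_int (4*m1))" using sq_gOI[OF e1(2)] by blast
  obtain k2 m2 where y: "(e2*\<beta>)\<^sup>2 = Complex (of_int (4*k2+1)) (of_int (4*m2))" using sq_gOI[OF e2(2)] by blast
  obtain k3 m3 where z: "(e3*\<gamma>)\<^sup>2 = Complex (of_int (4*k3+1)) (of_int (4*m3))" using sq_gOI[OF e3(2)] by blast
  note u1 = unit_sq[OF e1(1), of \<alpha>] and u2 = unit_sq[OF e2(1), of \<beta>] and u3 = unit_sq[OF e3(1), of \<gamma>]
  have eq2: "e1\<^sup>2 * (e1*\<alpha>)\<^sup>2 + \<i> * (e2\<^sup>2 * (e2*\<beta>)\<^sup>2) + (1+\<i>) * (e3\<^sup>2 * (e3*\<gamma>)\<^sup>2) = 0"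
  proof -
    have h1: "\<alpha>\<^sup>2 = e1\<^sup>2 * (e1*\<alpha>)\<^sup>2" using u1 by blast
    have h2: "\<beta>\<^sup>2 = e2\<^sup>2 * (e2*\<beta>)\<^sup>2" using u2 by blast
    have h3: "\<gamma>\<^sup>2 = e3\<^sup>2 * (e3*\<gamma>)\<^sup>2" using u3 by blast
    show ?thesis using eq unfolding h1 h2 h3 .
  qed
  have fin: "(e1 * \<alpha>)\<^sup>2 + \<i> * (e2 * \<beta>)\<^sup>2 = (1 + \<i>) * (e3 * \<gamma>)\<^sup>2"
    using core[OF x y z _ _ _ eq2] u1 u2 u3 by blast
  have "gcoprime (e1 * \<alpha>) (e2 * \<beta>)" using gcoprime_units cop e1 e2 by blast
  moreover have "(e1 * \<alpha>) * (e2 * \<beta>) * (e3 * \<gamma>) \<noteq> 0" using nz u1 u2 u3 by (simp add: mult.assoc)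
  ultimately show ?thesis using fin e1 e2 e3 by blast
qed

theorem theorem4p18:
  shows "(\<forall>\<alpha>\<in>gauss_ints. \<forall>\<beta>\<in>gauss_ints. \<forall>\<gamma>\<in>gauss_ints.
            \<alpha>\<^sup>2 + \<i> * \<beta>\<^sup>2 + (1 + \<i>) * \<gamma>\<^sup>2 = 0 \<and> \<alpha> * \<beta> * \<gamma> \<noteq> 0 \<and> gcoprime \<alpha> \<beta> \<longrightarrow>
            (\<exists>\<epsilon>1\<in>gunits. \<exists>\<epsilon>2\<in>gunits. \<exists>\<epsilon>3\<in>gunits.
               (\<epsilon>1 * \<alpha>)\<^sup>2 + \<i> * (\<epsilon>2 * \<beta>)\<^sup>2 = (1 + \<i>) * (\<epsilon>3 * \<gamma>)\<^sup>2 \<and>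
               \<epsilon>1 * \<alpha> \<in> gOI \<and> \<epsilon>2 * \<beta> \<in> gOI \<and> \<epsilon>3 * \<gamma> \<in> gOI \<and>
               gcoprime (\<epsilon>1 * \<alpha>) (\<epsilon>2 * \<beta>) \<and>
               (\<epsilon>1 * \<alpha>) * (\<epsilon>2 * \<beta>) * (\<epsilon>3 * \<gamma>) \<noteq> 0))
       \<and>
       (\<forall>X\<in>gauss_ints. \<forall>Y\<in>gauss_ints. \<forall>Z\<in>gauss_ints.
            X\<^sup>2 + \<i> * Y\<^sup>2 = (1 + \<i>) * Z\<^sup>2 \<and> gcoprime X Y \<and> X * Y * Z \<noteq> 0 \<longrightarrow>
            X\<^sup>2 + \<i> * Y\<^sup>2 + (1 + \<i>) * (\<i> * Z)\<^sup>2 = 0 \<and> gcoprime X Y \<and> X * Y * (\<i> * Z) \<noteq> 0)"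
  proof (rule conjI, goal_cases)
  case 1 show ?case
    by (intro ballI impI, elim conjE, rule part1; assumption)
next
  case 2 show ?case
  proof (intro ballI impI)
    fix X Y Z :: complex
    assume h: "X\<^sup>2 + \<i> * Y\<^sup>2 = (1 + \<i>) * Z\<^sup>2 \<and> gcoprime X Y \<and> X * Y * Z \<noteq> 0"
    have "(\<i> * Z)\<^sup>2 = - Z\<^sup>2" by (simp add: power_mult_distrib)
    then show "X\<^sup>2 + \<i> * Y\<^sup>2 + (1 + \<i>) * (\<i> * Z)\<^sup>2 = 0 \<and> gcoprime X Y \<and> X * Y * (\<i> * Z) \<noteq> 0"
      using h by simp
  qed
qed

end
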